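(* Consider the homogeneous tightly-feasible interference channel $[(N,M)^K]$ (all RXs have $N$ antennas, all TXs have $M$ antennas, with $M+N=K+1$), and assume $M\neq 1$ and $M\neq K$. Then there is no pair $(\mathcal S_{\mathrm{RX}},\mathcal S_{\mathrm{TX}})$ of subsets of $\mathcal K$, other than $(\emptyset,\emptyset)$ and $(\mathcal K,\mathcal K)$, satisfying $\mathcal N_{\mathrm{Var}}(\mathcal S_{\mathrm{RX}},\mathcal S_{\mathrm{TX}})=\mathcal N_{\mathrm{Eq}}(\mathcal S_{\mathrm{RX}},\mathcal S_{\mathrm{TX}})$ (i.e. no strictly included generalized tightly-feasible sub-IC).
   Context: $\mathcal K=\{1,\dots,K\}$, $K\ge2$. For $\mathcal S_{\mathrm{RX}},\mathcal S_{\mathrm{TX}}\subseteq\mathcal K$, with $N_i=N$ and $M_i=M$ for all $i$: $\mathcal N_{\mathrm{Var}}(\mathcal S_{\mathrm{RX}},\mathcal S_{\mathrm{TX}})=\sum_{i\in\mathcal S_{\mathrm{RX}}}(N_i-1)+\sum_{i\in\mathcal S_{\mathrm{TX}}}(M_i-1)$ and $\mathcal N_{\mathrm{Eq}}(\mathcal S_{\mathrm{RX}},\mathcal S_{\mathrm{TX}})=\#\{(j,k): j\in\mathcal S_{\mathrm{RX}},k\in\mathcal S_{\mathrm{TX}},j\ne k\}$. A generalized sub-IC is the interference channel formed by a subset of RXs and a subset of TXs (not necessarily paired); it is tightly-feasible when $\mathcal N_{\mathrm{Var}}=\mathcal N_{\mathrm{Eq}}$ for its pair of sets. *)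

theory Defs
  imports Main
begin

text \<open>Homogeneous K-user IC: every RX has N antennas, every TX has M antennas.
  Users are indexed by {1..K}.\<close>

definition N_Var :: "nat \<Rightarrow> nat \<Rightarrow> nat set \<Rightarrow> nat set \<Rightarrow> int" where
  "N_Var N M S_RX S_TX =
     (\<Sum>i\<in>S_RX. (int N - 1)) + (\<Sum>i\<in>S_TX. (int M - 1))"

definition N_Eq :: "nat set \<Rightarrow> nat set \<Rightarrow> int" where
  "N_Eq S_RX S_TX = int (card {(j, k). j \<in> S_RX \<and> k \<in> S_TX \<and> j \<noteq> k})"

end

theory Submission
  imports Defs
begin

lemma key:
  fixes a b p q :: nat
  assumes "p \<ge> 1" "q \<ge> 1" "a + b \<le> p + q + 1" "a * b \<le> a * q + b * p + c"
    "a * q + b * p + c \<le> a * b"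
  shows "a = 0 \<and> b = 0"
proof (cases "a \<le> p")
  case True
  then have h: "a * b \<le> b * p" by (simp add: mult.commute)
  have "a * q + c = 0" using assms(5) h by linarith
  then show ?thesis using assms by simp
next
  case False
  then have "b \<le> q" using assms(3) by simp
  then have h: "a * b \<le> a * q" by simp
  have "b * p + c = 0" using assms(5) h by linarith
  then show ?thesis using assms by simp
qed

lemma card_offdiag:
  assumes "finite A" "finite B"
  shows "card {(j, k). j \<in> A \<and> k \<in> B \<and> j \<noteq> k} + card (A \<inter> B) = card A * card B"
proof -
  have e: "A \<times> B = {(j, k). j \<in> A \<and> k \<in> B \<and> j \<noteq> k} \<union> (\<lambda>x. (x,x)) ` (A \<inter> B)" by auto
  have "card (A \<times> B) = card {(j, k). j \<in> A \<and> k \<in> B \<and> j \<noteq> k} + card ((\<lambda>x. (x,x)) ` (A \<inter> B))"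
    unfolding e
  proof (rule card_Un_disjoint)
    show "finite {(j, k). j \<in> A \<and> k \<in> B \<and> j \<noteq> k}"
      by (rule finite_subset[of _ "A \<times> B"]) (use assms in auto)
  qed (use assms in auto)
  moreover have "card ((\<lambda>x. (x,x)) ` (A \<inter> B)) = card (A \<inter> B)"
    by (rule card_image) (auto simp: inj_on_def)
  ultimately show ?thesis by (simp add: card_cartesian_product)
qed

theorem corollary1:
  fixes K N M :: nat
  assumes "K \<ge> 2" and "N \<ge> 1" and "M \<ge> 1"
    and "M + N = K + 1"
    and "M \<noteq> 1" and "M \<noteq> K"
  shows "\<not> (\<exists>S_RX S_TX. S_RX \<subseteq> {1..K} \<and> S_TX \<subseteq> {1..K}
            \<and> \<not> (S_RX = {} \<and> S_TX = {})
            \<and> \<not> (S_RX = {1..K} \<and> S_TX = {1..K})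
            \<and> N_Var N M S_RX S_TX = N_Eq S_RX S_TX)"
proof
  assume "\<exists>S_RX S_TX. S_RX \<subseteq> {1..K} \<and> S_TX \<subseteq> {1..K}
            \<and> \<not> (S_RX = {} \<and> S_TX = {})
            \<and> \<not> (S_RX = {1..K} \<and> S_TX = {1..K})
            \<and> N_Var N M S_RX S_TX = N_Eq S_RX S_TX"
  then obtain A B where A: "A \<subseteq> {1..K}" and B: "B \<subseteq> {1..K}"
    and ne: "\<not> (A = {} \<and> B = {})" and nf: "\<not> (A = {1..K} \<and> B = {1..K})"
    and eq: "N_Var N M A B = N_Eq A B" by blast
  have fA: "finite A" and fB: "finite B" using A B finite_subset by blast+
  define a where "a = card A"
  define b where "b = card B"
  define c where "c = card (A \<inter> B)"
  define p where "p = M - 1"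
  define q where "q = K - M"
  have p1: "p \<ge> 1" and q1: "q \<ge> 1" and Kpq: "K = p + q + 1" and Nq: "N = q + 1"
    using assms unfolding p_def q_def by auto
  have aK: "a \<le> K" unfolding a_def using card_mono[OF _ A] by simp
  have bK: "b \<le> K" unfolding b_def using card_mono[OF _ B] by simp
  have ca: "c \<le> a" unfolding c_def a_def using fA by (simp add: card_mono)
  have cb: "c \<le> b" unfolding c_def b_def using fB by (simp add: card_mono)
  have "card (A \<union> B) \<le> K" using card_mono[of "{1..K}" "A \<union> B"] A B by simp
  moreover have "card (A \<union> B) + card (A \<inter> B) = card A + card B"
    using card_Un_Int[OF fA fB] by simp
  ultimately have abc: "a + b \<le> K + c" unfolding a_def b_def c_def by simp
  have offd: "card {(j, k). j \<in> A \<and> k \<in> B \<and> j \<noteq> k} + c = a * b"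
    using card_offdiag[OF fA fB] unfolding a_def b_def c_def .
  have offi: "int (card {(j, k). j \<in> A \<and> k \<in> B \<and> j \<noteq> k}) = int (a * b) - int c"
    using offd by linarith
  have "int N - 1 = int q" "int M - 1 = int p" using Nq p1 unfolding p_def by auto
  then have "int (a * q + b * p) = int (a * b) - int c"
    using eq offi unfolding N_Var_def N_Eq_def a_def[symmetric] b_def[symmetric]
    by (simp add: a_def b_def mult.commute)
  then have E: "a * q + b * p + c = a * b" by linarith
  show False
  proof (cases "a + b \<le> K")
    case True
    have "a = 0 \<and> b = 0" by (rule key[where a=a and b=b and p=p and q=q and c=c]) (use p1 q1 True Kpq E in auto)
    then have "A = {} \<and> B = {}" using fA fB unfolding a_def b_def by simp
    then show False using ne by simp
  next
    case False
    define a' where "a' = K - a"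
    define b' where "b' = K - b"
    define c' where "c' = c + K - a - b"
    have "b' = 0 \<and> a' = 0"
    proof (rule key[where a=b' and b=a' and p=p and q=q and c=c'])
      show "1 \<le> p" "1 \<le> q" by fact+
      show "b' + a' \<le> p + q + 1" using False aK bK Kpq unfolding a'_def b'_def by simp
      have ia: "int a' = int K - int a" using aK unfolding a'_def by simp
      have ib: "int b' = int K - int b" using bK unfolding b'_def by simp
      have ic: "int c' = int c + int K - int a - int b" using abc unfolding c'_def by simp
      have iE: "int a * int q + int b * int p + int c = int a * int b" using E
        by (metis of_nat_add of_nat_mult)
      have iK: "int K = int p + int q + 1" using Kpq by simp
      have "int (b' * q + a' * p + c') = int b' * int q + int a' * int p + int c'" by simp
      also have "\<dots> = int b' * int a'" unfolding ia ib ic iK using iE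
        by (simp add: algebra_simps)
      finally have "int (b' * q + a' * p + c') = int (b' * a')" by simp
      then have "b' * q + a' * p + c' = b' * a'" by linarith
      then show "b' * a' \<le> b' * q + a' * p + c'" "b' * q + a' * p + c' \<le> b' * a'" by (simp_all add: algebra_simps)
    qed
    then have "a = K" "b = K" using aK bK unfolding a'_def b'_def by auto
    then have "A = {1..K}" "B = {1..K}"
      using A B fA fB unfolding a_def b_def by (simp_all add: card_subset_eq)
    then show False using nf by simp
  qed
qed

end
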